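(* Consider the constrained nonlinear system $x(k+1)=f(x(k),u(k))$ with $f(0,0)=0$, input constraint $u\in\mathcal{U}=\{u=[u_1,\dots,u_m]^T\in\mathbb{R}^m:|u_i|\le\bar u_i,\ i=1,\dots,m\}$ and state constraint $x\in\mathcal{X}$ with $0\in\mathcal{X}$. For a horizon $N\ge 1$ and a stage cost $l$, let $$J(x(k),U(k|k))=\sum_{i=0}^{N-1} l\big(x(k+i+1|k),u(k+i|k)\big),$$ where $U(k|k)=[u(k|k)^T,\dots,u(k+N-1|k)^T]^T$, $x(k|k)=x(k)$ and $x(k+i+1|k)=f(x(k+i|k),u(k+i|k))$, and let $J^*(x(k))=\min J(x(k),U(k|k))$ over $u(k+i|k)\in\mathcal{U}$ subject to the dynamics and $x(k+i+1|k)\in\mathcal{X}$, $i=0,\dots,N-1$, with optimal control sequence $u^*(k|k),\dots,u^*(k+N-1|k)$ and optimal predicted states $x^*(k+1|k),\dots,x^*(k+N|k)$. The MPC law applies $u(k)=u^*(k|k)$. Assume there exist $\alpha_1,\alpha_2\in\mathcal{K}_\infty$ with $\alpha_1(\|x\|)\le J^*(x)\le\alpha_2(\|x\|)$ for all $x\in\mathcal{X}$. Suppose the optimisation problem is feasible at the initial state $x(0)=x_0$ and that (at each time $k$ at which it is solved) there exists a control $u(k+N|k)\in\mathcal{U}$ such that $x(k+N+1|k)=f(x^*(k+N|k),u(k+N|k))\in\mathcal{X}$ and $$l\big(x(k+N+1|k),u(k+N|k)\big)-l\big(x^*(k+1|k),u^*(k|k)\big)\le 0.$$ Then (1) the optimisation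 problem is recursively feasible, and (2) the closed-loop system under this MPC algorithm is stable.
   Context: A function $\phi:\mathbb{R}_+\to\mathbb{R}_+$ is of class $\mathcal{K}$ if it is continuous, strictly increasing and $\phi(0)=0$; it is of class $\mathcal{K}_\infty$ if in addition it is radially unbounded. Stability refers to stability of the origin of the closed-loop system $x(k+1)=f(x(k),u^*(k|k))$. *)

theory Defs
  imports "HOL-Analysis.Analysis"
begin

definition classK :: "(real \<Rightarrow> real) \<Rightarrow> bool" where
  "classK \<phi> \<longleftrightarrow> continuous_on {0..} \<phi> \<and> strict_mono_on {0..} \<phi> \<and> \<phi> 0 = 0"

definition classKinf :: "(real \<Rightarrow> real) \<Rightarrow> bool" where
  "classKinf \<phi> \<longleftrightarrow> classK \<phi> \<and> filterlim \<phi> at_top at_top"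

definition input_set :: "real^'m \<Rightarrow> (real^'m) set" where
  "input_set ubar = {u. \<forall>i. \<bar>u $ i\<bar> \<le> ubar $ i}"

fun pred :: "('x \<Rightarrow> 'u \<Rightarrow> 'x) \<Rightarrow> 'x \<Rightarrow> (nat \<Rightarrow> 'u) \<Rightarrow> nat \<Rightarrow> 'x" where
  "pred f x us 0 = x"
| "pred f x us (Suc i) = f (pred f x us i) (us i)"

definition cost :: "('x \<Rightarrow> 'u \<Rightarrow> 'x) \<Rightarrow> ('x \<Rightarrow> 'u \<Rightarrow> real) \<Rightarrow> nat \<Rightarrow> 'x \<Rightarrow> (nat \<Rightarrow> 'u) \<Rightarrow> real" where
  "cost f l N x us = (\<Sum>i<N. l (pred f x us (Suc i)) (us i))"

definition feasible_seq :: "('x \<Rightarrow> 'u \<Rightarrow> 'x) \<Rightarrow> 'u set \<Rightarrow> 'x set \<Rightarrow> nat \<Rightarrow> 'x \<Rightarrow> (nat \<Rightarrow> 'u) \<Rightarrow> bool" where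
  "feasible_seq f U X N x us \<longleftrightarrow> (\<forall>i<N. us i \<in> U \<and> pred f x us (Suc i) \<in> X)"

definition feasible :: "('x \<Rightarrow> 'u \<Rightarrow> 'x) \<Rightarrow> 'u set \<Rightarrow> 'x set \<Rightarrow> nat \<Rightarrow> 'x \<Rightarrow> bool" where
  "feasible f U X N x \<longleftrightarrow> (\<exists>us. feasible_seq f U X N x us)"

definition Jstar :: "('x \<Rightarrow> 'u \<Rightarrow> 'x) \<Rightarrow> ('x \<Rightarrow> 'u \<Rightarrow> real) \<Rightarrow> 'u set \<Rightarrow> 'x set \<Rightarrow> nat \<Rightarrow> 'x \<Rightarrow> real" where
  "Jstar f l U X N x = Inf {cost f l N x us | us. feasible_seq f U X N x us}"

definition is_optimizer :: "('x \<Rightarrow> 'u \<Rightarrow> 'x) \<Rightarrow> ('x \<Rightarrow> 'u \<Rightarrow> real) \<Rightarrow> 'u set \<Rightarrow> 'x set \<Rightarrow> nat \<Rightarrow> ('x \<Rightarrow> nat \<Rightarrow> 'u) \<Rightarrow> bool" where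
  "is_optimizer f l U X N opt \<longleftrightarrow>
     (\<forall>x. feasible f U X N x \<longrightarrow> feasible_seq f U X N x (opt x) \<and>
        (\<forall>us. feasible_seq f U X N x us \<longrightarrow> cost f l N x (opt x) \<le> cost f l N x us))"

fun closed_loop :: "('x \<Rightarrow> 'u \<Rightarrow> 'x) \<Rightarrow> ('x \<Rightarrow> nat \<Rightarrow> 'u) \<Rightarrow> 'x \<Rightarrow> nat \<Rightarrow> 'x" where
  "closed_loop f opt x0 0 = x0"
| "closed_loop f opt x0 (Suc k) = f (closed_loop f opt x0 k) (opt (closed_loop f opt x0 k) 0)"

definition terminal_cond :: "('x \<Rightarrow> 'u \<Rightarrow> 'x) \<Rightarrow> ('x \<Rightarrow> 'u \<Rightarrow> real) \<Rightarrow> 'u set \<Rightarrow> 'x set \<Rightarrow> nat \<Rightarrow> ('x \<Rightarrow> nat \<Rightarrow> 'u) \<Rightarrow> 'x \<Rightarrow> bool" where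
  "terminal_cond f l U X N opt x \<longleftrightarrow>
     (\<exists>v\<in>U. f (pred f x (opt x) N) v \<in> X \<and>
        l (f (pred f x (opt x) N) v) v - l (pred f x (opt x) 1) (opt x 0) \<le> 0)"

definition admissible_init where
  "admissible_init f l U X N opt x0 \<longleftrightarrow> x0 \<in> X \<and> feasible f U X N x0 \<and>
     (\<forall>k. feasible f U X N (closed_loop f opt x0 k) \<longrightarrow>
          terminal_cond f l U X N opt (closed_loop f opt x0 k))"

end

theory Submission
  imports Defs
begin

lemma shift_pred:
  fixes us :: "nat \<Rightarrow> 'u" and M :: nat and v :: 'u
  defines "us' \<equiv> (\<lambda>i. if i < M then us (Suc i) else v)"
  shows "i \<le> M \<Longrightarrow> pred f (f x (us 0)) us' i = pred f x us (Suc i)"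
proof (induction i)
  case 0 then show ?case by simp
next
  case (Suc i) then show ?case by (simp add: us'_def)
qed

lemma shift_props:
  fixes us :: "nat \<Rightarrow> 'u" and M :: nat and v :: 'u
  assumes fs: "feasible_seq f U X (Suc M) x us" and v: "v \<in> U"
    and fv: "f (pred f x us (Suc M)) v \<in> X"
  defines "us' \<equiv> (\<lambda>i. if i < M then us (Suc i) else v)"
  shows "feasible_seq f U X (Suc M) (f x (us 0)) us'"
    and "cost f l (Suc M) (f x (us 0)) us' = cost f l (Suc M) x us
           - l (pred f x us 1) (us 0) + l (f (pred f x us (Suc M)) v) v"
proof -
  have P: "i \<le> M \<Longrightarrow> pred f (f x (us 0)) us' i = pred f x us (Suc i)" for i
    unfolding us'_def by (rule shift_pred)
  have PN: "pred f (f x (us 0)) us' (Suc M) = f (pred f x us (Suc M)) v"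
    using P[of M] by (simp add: us'_def)
  show "feasible_seq f U X (Suc M) (f x (us 0)) us'"
    unfolding feasible_seq_def
  proof (intro allI impI)
    fix i assume i: "i < Suc M"
    show "us' i \<in> U \<and> pred f (f x (us 0)) us' (Suc i) \<in> X"
    proof (cases "i < M")
      case True
      then have "pred f (f x (us 0)) us' (Suc i) = pred f x us (Suc (Suc i))"
        using P[of "Suc i"] by simp
      then show ?thesis using fs True unfolding feasible_seq_def us'_def by auto
    next
      case False
      then have "i = M" using i by simp
      then show ?thesis using PN v fv by (simp add: us'_def)
    qed
  qed
  have A: "cost f l (Suc M) (f x (us 0)) us' =
      (\<Sum>i<M. l (pred f x us (Suc (Suc i))) (us (Suc i))) + l (f (pred f x us (Suc M)) v) v"
  proof -
    have "cost f l (Suc M) (f x (us 0)) us' =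
      (\<Sum>i<M. l (pred f (f x (us 0)) us' (Suc i)) (us' i)) + l (pred f (f x (us 0)) us' (Suc M)) (us' M)"
      unfolding cost_def by simp
    also have "(\<Sum>i<M. l (pred f (f x (us 0)) us' (Suc i)) (us' i)) =
       (\<Sum>i<M. l (pred f x us (Suc (Suc i))) (us (Suc i)))"
    proof (rule sum.cong)
      fix i assume "i \<in> {..<M}"
      then have "i < M" by simp
      then show "l (pred f (f x (us 0)) us' (Suc i)) (us' i) = l (pred f x us (Suc (Suc i))) (us (Suc i))"
        using P[of "Suc i"] by (simp only: us'_def if_True Suc_le_eq)
    qed simp
    finally show ?thesis using PN by (simp add: us'_def)
  qed
  have B: "cost f l (Suc M) x us = l (pred f x us 1) (us 0) +
      (\<Sum>i<M. l (pred f x us (Suc (Suc i))) (us (Suc i)))"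
    unfolding cost_def by (subst sum.lessThan_Suc_shift) simp
  show "cost f l (Suc M) (f x (us 0)) us' = cost f l (Suc M) x us
           - l (pred f x us 1) (us 0) + l (f (pred f x us (Suc M)) v) v"
    using A B by simp
qed

lemma Jstar_opt:
  assumes "is_optimizer f l U X N opt" "feasible f U X N x"
  shows "Jstar f l U X N x = cost f l N x (opt x)"
proof -
  have o: "feasible_seq f U X N x (opt x)"
    "\<And>us. feasible_seq f U X N x us \<Longrightarrow> cost f l N x (opt x) \<le> cost f l N x us"
    using assms unfolding is_optimizer_def by auto
  show ?thesis unfolding Jstar_def
    by (rule cInf_eq_minimum) (use o in auto)
qed

lemma step:
  assumes opt: "is_optimizer f l U X (Suc M) opt" and fe: "feasible f U X (Suc M) x"
    and tc: "terminal_cond f l U X (Suc M) opt x"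
  shows "feasible f U X (Suc M) (f x (opt x 0))"
    and "Jstar f l U X (Suc M) (f x (opt x 0)) \<le> Jstar f l U X (Suc M) x"
    and "f x (opt x 0) \<in> X"
proof -
  have fs: "feasible_seq f U X (Suc M) x (opt x)" using opt fe unfolding is_optimizer_def by auto
  obtain v where v: "v \<in> U" "f (pred f x (opt x) (Suc M)) v \<in> X"
    "l (f (pred f x (opt x) (Suc M)) v) v - l (pred f x (opt x) 1) (opt x 0) \<le> 0"
    using tc unfolding terminal_cond_def by auto
  define us' where "us' = (\<lambda>i. if i < M then opt x (Suc i) else v)"
  have f1: "feasible_seq f U X (Suc M) (f x (opt x 0)) us'"
    and c1: "cost f l (Suc M) (f x (opt x 0)) us' = cost f l (Suc M) x (opt x)
           - l (pred f x (opt x) 1) (opt x 0) + l (f (pred f x (opt x) (Suc M)) v) v"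
    using shift_props[OF fs v(1) v(2)] unfolding us'_def by auto
  show fe1: "feasible f U X (Suc M) (f x (opt x 0))" using f1 unfolding feasible_def by blast
  have "Jstar f l U X (Suc M) (f x (opt x 0)) = cost f l (Suc M) (f x (opt x 0)) (opt (f x (opt x 0)))"
    by (rule Jstar_opt[OF opt fe1])
  also have "\<dots> \<le> cost f l (Suc M) (f x (opt x 0)) us'"
    using opt fe1 f1 unfolding is_optimizer_def by auto
  also have "\<dots> \<le> cost f l (Suc M) x (opt x)" using c1 v(3) by simp
  also have "\<dots> = Jstar f l U X (Suc M) x" using Jstar_opt[OF opt fe] by simp
  finally show "Jstar f l U X (Suc M) (f x (opt x 0)) \<le> Jstar f l U X (Suc M) x" .
  show "f x (opt x 0) \<in> X" using fs unfolding feasible_seq_def by auto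
qed

lemma loop_props:
  assumes opt: "is_optimizer f l U X (Suc M) opt"
    and init: "admissible_init f l U X (Suc M) opt y0"
  shows "feasible f U X (Suc M) (closed_loop f opt y0 k) \<and> closed_loop f opt y0 k \<in> X \<and>
         Jstar f l U X (Suc M) (closed_loop f opt y0 k) \<le> Jstar f l U X (Suc M) y0"
proof (induction k)
  case 0 then show ?case using init unfolding admissible_init_def by auto
next
  case (Suc k)
  have tc: "terminal_cond f l U X (Suc M) opt (closed_loop f opt y0 k)"
    using init Suc unfolding admissible_init_def by auto
  show ?case using step[OF opt _ tc] Suc by (auto intro: order_trans)
qed

theorem theorem4:
  fixes f :: "real^'n \<Rightarrow> real^'m \<Rightarrow> real^'n"
    and l :: "real^'n \<Rightarrow> real^'m \<Rightarrow> real"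
    and ubar :: "real^'m"
    and X :: "(real^'n) set"
    and N :: nat
    and opt :: "real^'n \<Rightarrow> nat \<Rightarrow> real^'m"
    and \<alpha>1 \<alpha>2 :: "real \<Rightarrow> real"
    and x0 :: "real^'n"
  assumes f0: "f 0 0 = 0"
    and X0: "0 \<in> X"
    and N1: "N \<ge> 1"
    and opt: "is_optimizer f l (input_set ubar) X N opt"
    and K1: "classKinf \<alpha>1" and K2: "classKinf \<alpha>2"
    and bounds: "\<forall>x\<in>X. feasible f (input_set ubar) X N x \<longrightarrow>
        \<alpha>1 (norm x) \<le> Jstar f l (input_set ubar) X N x \<and>
        Jstar f l (input_set ubar) X N x \<le> \<alpha>2 (norm x)"
    and init: "admissible_init f l (input_set ubar) X N opt x0"
  shows "(\<forall>k. feasible f (input_set ubar) X N (closed_loop f opt x0 k)) \<and>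
         (\<forall>\<epsilon>>0. \<exists>\<delta>>0. \<forall>y0. admissible_init f l (input_set ubar) X N opt y0 \<and> norm y0 < \<delta> \<longrightarrow>
             (\<forall>k. norm (closed_loop f opt y0 k) < \<epsilon>))"
proof -
  obtain M where M: "N = Suc M" using N1 by (cases N) auto
  note LP = loop_props[OF opt[unfolded M]]
  have part1: "\<forall>k. feasible f (input_set ubar) X N (closed_loop f opt x0 k)"
    using LP init unfolding M by blast
  have part2: "\<exists>\<delta>>0. \<forall>y0. admissible_init f l (input_set ubar) X N opt y0 \<and> norm y0 < \<delta> \<longrightarrow>
             (\<forall>k. norm (closed_loop f opt y0 k) < \<epsilon>)" if eps: "\<epsilon> > 0" for \<epsilon>
  proof -
    have sm1: "strict_mono_on {0..} \<alpha>1" and a10: "\<alpha>1 0 = 0"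
      using K1 unfolding classKinf_def classK_def by auto
    have c2: "continuous_on {0..} \<alpha>2" and a20: "\<alpha>2 0 = 0"
      using K2 unfolding classKinf_def classK_def by auto
    have pos: "\<alpha>1 \<epsilon> > 0" using sm1 eps a10
      by (metis atLeast_iff order_refl less_imp_le strict_mono_onD)
    obtain \<delta> where d: "\<delta> > 0" "\<And>s. s \<in> {0..} \<Longrightarrow> dist s 0 < \<delta> \<Longrightarrow> dist (\<alpha>2 s) (\<alpha>2 0) < \<alpha>1 \<epsilon>"
      using c2 pos unfolding continuous_on_iff by (metis atLeast_iff order_refl)
    show ?thesis
    proof (intro exI[of _ \<delta>] conjI allI impI)
      show "\<delta> > 0" by (rule d(1))
    next
      fix y0 k assume a: "admissible_init f l (input_set ubar) X N opt y0 \<and> norm y0 < \<delta>"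
      let ?x = "closed_loop f opt y0 k"
      have L: "feasible f (input_set ubar) X N ?x" "?x \<in> X"
        "Jstar f l (input_set ubar) X N ?x \<le> Jstar f l (input_set ubar) X N y0"
        using LP[of y0 k] a unfolding M by auto
      have y0: "y0 \<in> X" "feasible f (input_set ubar) X N y0"
        using a unfolding admissible_init_def by auto
      have "\<alpha>2 (norm y0) < \<alpha>1 \<epsilon>" using d(2)[of "norm y0"] a a20 by auto
      then have lt: "\<alpha>1 (norm ?x) < \<alpha>1 \<epsilon>"
        using bounds L y0 by (meson le_less_trans order_trans)
      show "norm ?x < \<epsilon>"
      proof (rule ccontr)
        assume "\<not> norm ?x < \<epsilon>"
        then have "\<epsilon> \<le> norm ?x" by simp
        then have "\<alpha>1 \<epsilon> \<le> \<alpha>1 (norm ?x)"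
          using sm1 eps by (metis atLeast_iff less_imp_le order.order_iff_strict strict_mono_onD norm_ge_zero)
        then show False using lt by simp
      qed
    qed
  qed
  show ?thesis using part1 part2 by blast
qed

end
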